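(* Consider Algorithm ProxSVRG (described in the context) with minibatch size $b\le n$, epoch length $m\ge 1$, a number of inner iterations $T$ that is a multiple of $m$, and step size $\eta=\rho/L$, where $0<\rho<1/2$ satisfies $$\frac{4\rho^2 m^2}{b}+\rho\le 1 .$$ Then the output $x_a$ of the algorithm satisfies $$\mathbb E\big[\|\mathcal G_\eta(x_a)\|^2\big]\le \frac{2L\,(F(x^0)-F(x^* ))}{\rho(1-2\rho)\,T},$$ where $x^*$ is an optimal solution of $\min_x F(x)$.
   Context: Setting: Let $n,d\ge 1$ be integers and $[n]=\{1,\dots,n\}$. Let $f_1,\dots,f_n:\mathbb R^d\to\mathbb R$ be differentiable (possibly nonconvex) functions, each $L$-smooth for some $L>0$, i.e. $\|\nabla f_i(x)-\nabla f_i(y)\|\le L\|x-y\|$ for all $x,y\in\mathbb R^d$ and $i\in[n]$. Let $f=\frac1n\sum_{i=1}^n f_i$. Let $h:\mathbb R^d\to\mathbb R\cup\{+\infty\}$ be proper, lower semicontinuous and convex, with closed domain. Let $F=f+h$, and let $x^*$ be a global minimizer of $F$ on $\mathbb R^d$ (assumed to exist). For $\eta>0$, $\mathrm{prox}_{\eta h}(x):=\arg\min_{y\in\mathbb R^d}\big(h(y)+\frac1{2\eta}\|y-x\|^2\big)$, and the gradient mapping is $\mathcal G_\eta(x):=\frac1\eta\big[x-\mathrm{prox}_{\eta h}(x-\eta\nabla f(x))\big]$. Algorithm ProxSVRG$(x^0,T,m,b,\eta)$: Given $x^0\in\mathbb R^d$, positive integers $T,m,b$ and $\eta>0$, let $S=\lceil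 T/m\rceil$ and set $\tilde x^0=x^0_m=x^0$. For $s=0,\dots,S-1$: set $x^{s+1}_0=x^s_m$ and $g^{s+1}=\frac1n\sum_{i=1}^n\nabla f_i(\tilde x^s)$; for $t=0,\dots,m-1$: draw a multiset $I_t$ of $b$ indices, each drawn independently and uniformly at random from $[n]$ (with replacement, independently of all previous draws), set $v^{s+1}_t=\frac1b\sum_{i\in I_t}\big(\nabla f_i(x^{s+1}_t)-\nabla f_i(\tilde x^s)\big)+g^{s+1}$ and $x^{s+1}_{t+1}=\mathrm{prox}_{\eta h}(x^{s+1}_t-\eta v^{s+1}_t)$; after the inner loop set $\tilde x^{s+1}=x^{s+1}_m$. The output $x_a$ is chosen uniformly at random from $\{x^{s+1}_t: 0\le t\le m-1,\ 0\le s\le S-1\}$. Expectations are over all randomness of the algorithm. *)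

theory Defs
  imports "HOL-Analysis.Analysis" "HOL-Probability.Probability"
begin

definition proper_ext :: "('a \<Rightarrow> ereal) \<Rightarrow> bool" where
  "proper_ext h \<longleftrightarrow> (\<forall>x. h x \<noteq> -\<infinity>) \<and> (\<exists>x. h x \<noteq> \<infinity>)"

definition lsc_ext :: "('a::topological_space \<Rightarrow> ereal) \<Rightarrow> bool" where
  "lsc_ext h \<longleftrightarrow> (\<forall>c. closed {x. h x \<le> c})"

definition convex_ext :: "('a::real_vector \<Rightarrow> ereal) \<Rightarrow> bool" where
  "convex_ext h \<longleftrightarrow> (\<forall>x y (u::real). 0 \<le> u \<and> u \<le> 1 \<longrightarrow>
      h ((1 - u) *\<^sub>R x + u *\<^sub>R y) \<le> ereal (1 - u) * h x + ereal u * h y)"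

definition dom_ext :: "('a \<Rightarrow> ereal) \<Rightarrow> 'a set" where
  "dom_ext h = {x. h x \<noteq> \<infinity>}"

definition prox :: "real \<Rightarrow> ('a::real_normed_vector \<Rightarrow> ereal) \<Rightarrow> 'a \<Rightarrow> 'a" where
  "prox \<eta> h x = (SOME y. \<forall>z. h y + ereal (norm (y - x) ^ 2 / (2 * \<eta>))
                              \<le> h z + ereal (norm (z - x) ^ 2 / (2 * \<eta>)))"

definition full_grad :: "nat \<Rightarrow> (nat \<Rightarrow> 'a \<Rightarrow> 'a::real_vector) \<Rightarrow> 'a \<Rightarrow> 'a" where
  "full_grad n grad x = (1 / real n) *\<^sub>R (\<Sum>i<n. grad i x)"

definition grad_map :: "nat \<Rightarrow> (nat \<Rightarrow> 'a \<Rightarrow> 'a::real_normed_vector) \<Rightarrow> ('a \<Rightarrow> ereal)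
                         \<Rightarrow> real \<Rightarrow> 'a \<Rightarrow> 'a" where
  "grad_map n grad h \<eta> x = (1 / \<eta>) *\<^sub>R (x - prox \<eta> h (x - \<eta> *\<^sub>R full_grad n grad x))"

text \<open>One inner step of ProxSVRG at global inner-iteration index k = s*m + t.
  The state is (current iterate, snapshot).  At the start of each epoch
  (k mod m = 0) the snapshot is set to the current iterate (x^{s+1}_0 = x^s_m = \<tilde>x^s).
  I is the list (multiset) of b sampled indices.\<close>
definition svrg_step :: "nat \<Rightarrow> (nat \<Rightarrow> 'a \<Rightarrow> 'a::real_normed_vector) \<Rightarrow> ('a \<Rightarrow> ereal)
      \<Rightarrow> real \<Rightarrow> nat \<Rightarrow> nat \<Rightarrow> nat \<Rightarrow> nat list \<Rightarrow> 'a \<times> 'a \<Rightarrow> 'a \<times> 'a" where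
  "svrg_step n grad h \<eta> m b k I st =
     (let x = fst st;
          xt = (if k mod m = 0 then fst st else snd st);
          v = (1 / real b) *\<^sub>R (\<Sum>i\<leftarrow>I. grad i x - grad i xt) + full_grad n grad xt
      in (prox \<eta> h (x - \<eta> *\<^sub>R v), xt))"

primrec svrg_state :: "nat \<Rightarrow> (nat \<Rightarrow> 'a \<Rightarrow> 'a::real_normed_vector) \<Rightarrow> ('a \<Rightarrow> ereal)
      \<Rightarrow> real \<Rightarrow> nat \<Rightarrow> nat \<Rightarrow> 'a \<Rightarrow> nat list list \<Rightarrow> nat \<Rightarrow> 'a \<times> 'a" where
  "svrg_state n grad h \<eta> m b x0 Is 0 = (x0, x0)"
| "svrg_state n grad h \<eta> m b x0 Is (Suc k) =
     svrg_step n grad h \<eta> m b k (Is ! k) (svrg_state n grad h \<eta> m b x0 Is k)"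

text \<open>Distribution of the output x_a of ProxSVRG(x0, T, m, b, \<eta>) for T a multiple of m:
  T minibatches, each consisting of b independent uniform indices from {0..<n}
  (i.e. [n] shifted to 0-based), followed by a uniform choice of one of the
  iterates x_k, k < T (k = s*m + t, 0 \<le> t < m, 0 \<le> s < T/m).\<close>
definition proxsvrg_output :: "nat \<Rightarrow> (nat \<Rightarrow> 'a \<Rightarrow> 'a::real_normed_vector) \<Rightarrow> ('a \<Rightarrow> ereal)
      \<Rightarrow> 'a \<Rightarrow> nat \<Rightarrow> nat \<Rightarrow> nat \<Rightarrow> real \<Rightarrow> 'a pmf" where
  "proxsvrg_output n grad h x0 T m b \<eta> =
     do { Is \<leftarrow> replicate_pmf T (replicate_pmf b (pmf_of_set {..<n}));
          k \<leftarrow> pmf_of_set {..<T};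
          return_pmf (fst (svrg_state n grad h \<eta> m b x0 Is k)) }"

end

theory Submission
  imports Defs
begin


lemma lsc_attains_min:
  fixes g :: "'a::topological_space \<Rightarrow> ereal"
  assumes K: "compact K" "K \<noteq> {}" and lsc: "\<And>c. closed {x. g x \<le> c}"
  shows "\<exists>z\<in>K. \<forall>y\<in>K. g z \<le> g y"
proof -
  have "K \<inter> (\<Inter>y\<in>K. {x. g x \<le> g y}) \<noteq> {}"
  proof (rule compact_imp_fip_image[OF K(1)])
    show "closed {x. g x \<le> g y}" for y using lsc by blast
    fix I' assume I': "finite I'" "I' \<subseteq> K"
    show "K \<inter> (\<Inter>y\<in>I'. {x. g x \<le> g y}) \<noteq> {}"
    proof (cases "I' = {}")
      case True thus ?thesis using K by auto
    next
      case False
      obtain z where z: "z \<in> I'" "\<forall>y\<in>I'. g z \<le> g y"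
        using ex_min_if_finite[of "g ` I'"] I'(1) False
        by (metis (no_types, lifting) Min_le arg_min_if_finite(1) arg_min_least finite_imageI image_is_empty order.refl)
      then show ?thesis using I' by auto
    qed
  qed
  then show ?thesis by auto
qed

lemma closed_sublevel_add:
  fixes h :: "'a::topological_space \<Rightarrow> ereal" and q :: "'a \<Rightarrow> real"
  assumes lsc: "\<And>c. closed {x. h x \<le> c}" and q: "continuous_on UNIV q"
  shows "closed {x. h x + ereal (q x) \<le> c}"
proof -
  have eq: "{x. h x + ereal (q x) \<le> c} = (\<Inter>t. {x. q x \<le> t} \<union> {x. h x \<le> c - ereal t})"
  proof (intro equalityI subsetI)
    fix x assume "x \<in> {x. h x + ereal (q x) \<le> c}"
    hence A: "h x + ereal (q x) \<le> c" by simp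
    show "x \<in> (\<Inter>t. {x. q x \<le> t} \<union> {x. h x \<le> c - ereal t})"
    proof -
      have "q x \<le> t \<or> h x \<le> c - ereal t" for t
        using A by (cases c; cases "h x") auto
      thus ?thesis by blast
    qed
  next
    fix x assume "x \<in> (\<Inter>t. {x. q x \<le> t} \<union> {x. h x \<le> c - ereal t})"
    hence B: "\<And>t. q x \<le> t \<or> h x \<le> c - ereal t" by auto
    show "x \<in> {x. h x + ereal (q x) \<le> c}"
    proof (simp, rule ereal_le_epsilon2)
      fix e :: real assume e: "0 < e"
      from B[of "q x - e"] e have "h x \<le> c - ereal (q x - e)" by auto
      thus "h x + ereal (q x) \<le> c + ereal e" by (cases c; cases "h x") auto
    qed
  qed
  show ?thesis unfolding eq
    by (intro closed_INT ballI closed_Un lsc closed_Collect_le q continuous_on_const)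
qed

lemma prox_exists:
  fixes h :: "'a::euclidean_space \<Rightarrow> ereal"
  assumes hp: "proper_ext h" and hl: "lsc_ext h" and hc: "convex_ext h" and eta: "\<eta> > 0"
  shows "\<exists>y. \<forall>z. h y + ereal (norm (y - u) ^ 2 / (2 * \<eta>)) \<le> h z + ereal (norm (z - u) ^ 2 / (2 * \<eta>))"
proof -
  have lsc: "\<And>c. closed {x. h x \<le> c}" using hl unfolding lsc_ext_def by blast
  have ninf: "\<And>x. h x \<noteq> -\<infinity>" using hp unfolding proper_ext_def by blast
  obtain x1 where x1: "h x1 \<noteq> \<infinity>" using hp unfolding proper_ext_def by blast
  define h1 where "h1 = real_of_ereal (h x1)"
  have h1: "h x1 = ereal h1" using x1 ninf[of x1] unfolding h1_def by (cases "h x1") auto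
  obtain z0 where z0: "z0 \<in> cball x1 1" "\<forall>y\<in>cball x1 1. h z0 \<le> h y"
    using lsc_attains_min[of "cball x1 1" h] lsc by auto
  have "h z0 \<le> h x1" using z0 by auto
  then obtain M where M: "h z0 = ereal M" using x1 ninf[of z0] by (cases "h z0") auto
  have Mh1: "M \<le> h1" using \<open>h z0 \<le> h x1\<close> M h1 by simp
  define B where "B = h1 - M"
  have B: "B \<ge> 0" using Mh1 B_def by simp
  have lb: "ereal (M - B * norm (y - x1)) \<le> h y" for y
  proof (cases "norm (y - x1) \<le> 1")
    case True
    hence "y \<in> cball x1 1" by (simp add: dist_norm norm_minus_commute)
    hence "ereal M \<le> h y" using z0 M by metis
    moreover have "M - B * norm (y - x1) \<le> M" using B by simp
    ultimately show ?thesis by (meson ereal_less_eq(3) order_trans)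
  next
    case False
    define r where "r = norm (y - x1)"
    have r: "r > 1" using False r_def by simp
    show ?thesis
    proof (cases "h y = \<infinity>")
      case True thus ?thesis by simp
    next
      case False
      then obtain hy where hy: "h y = ereal hy" using ninf[of y] by (cases "h y") auto
      define u where "u = 1 / r"
      have u: "0 \<le> u" "u \<le> 1" "u > 0" using r u_def by auto
      define z where "z = (1 - u) *\<^sub>R x1 + u *\<^sub>R y"
      have "z - x1 = u *\<^sub>R (y - x1)" unfolding z_def by (simp add: algebra_simps)
      hence "norm (z - x1) = 1" using u r unfolding u_def r_def by simp
      hence "z \<in> cball x1 1" by (simp add: dist_norm norm_minus_commute)
      hence "ereal M \<le> h z" using z0 M by metis
      also have "h z \<le> ereal (1 - u) * h x1 + ereal u * h y"
        using hc u unfolding convex_ext_def z_def by blast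
      finally have "M \<le> (1 - u) * h1 + u * hy" using h1 hy by simp
      hence "r * M \<le> r * ((1 - u) * h1 + u * hy)" using r by simp
      also have "\<dots> = (r - 1) * h1 + hy" using r unfolding u_def by (simp add: field_simps)
      finally have "r * M \<le> (r - 1) * h1 + hy" .
      moreover have "B * r = h1 * r - M * r" "(r - 1) * h1 = r * h1 - h1"
        unfolding B_def by (simp_all add: algebra_simps)
      ultimately have "M - B * r \<le> hy" using Mh1 by (simp add: mult.commute)
      thus ?thesis using hy r_def by simp
    qed
  qed
  define \<phi> where "\<phi> y = h y + ereal (norm (y - u) ^ 2 / (2 * \<eta>))" for y
  define c0 where "c0 = h1 + norm (x1 - u) ^ 2 / (2 * \<eta>)"
  have phix1: "\<phi> x1 = ereal c0" unfolding \<phi>_def c0_def h1 by simp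
  define K where "K = {y. \<phi> y \<le> ereal c0}"
  have cl: "closed {y. \<phi> y \<le> c}" for c unfolding \<phi>_def
    using eta by (intro closed_sublevel_add lsc continuous_intros) auto
  define d where "d = norm (x1 - u)"
  define C where "C = 2 * \<eta> * (c0 - M + B * d)"
  define D where "D = 2 * \<eta> * B"
  have D: "D \<ge> 0" using B eta D_def by simp
  have bd: "norm (y - x1) \<le> d + 1 + \<bar>C\<bar> + D" if y: "y \<in> K" for y
  proof (rule ccontr)
    assume nt: "\<not> norm (y - x1) \<le> d + 1 + \<bar>C\<bar> + D"
    define r where "r = norm (y - x1)"
    define s where "s = r - d"
    have s1: "s \<ge> 1" and s2: "s > \<bar>C\<bar> + D" using nt D unfolding s_def r_def by auto
    have tri: "norm (y - x1) \<le> norm (y - u) + norm (u - x1)"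
      by (rule norm_diff_triangle_le) auto
    have "norm (u - x1) = d" by (simp add: d_def norm_minus_commute)
    hence "norm (y - u) \<ge> s" using tri unfolding s_def r_def by linarith
    hence sq: "s ^ 2 \<le> norm (y - u) ^ 2" using s1 by (simp add: power_mono)
    have "ereal (M - B * r) + ereal (norm (y - u) ^ 2 / (2 * \<eta>)) \<le> \<phi> y"
      unfolding \<phi>_def r_def by (intro add_right_mono lb)
    also have "\<dots> \<le> ereal c0" using y K_def by simp
    finally have "M - B * r + norm (y - u) ^ 2 / (2 * \<eta>) \<le> c0" by simp
    hence "norm (y - u) ^ 2 \<le> 2 * \<eta> * (c0 - M + B * r)" using eta by (simp add: field_simps)
    hence "s ^ 2 \<le> C + D * s" using sq unfolding C_def D_def s_def by (simp add: algebra_simps)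
    moreover have "C + D * s \<le> \<bar>C\<bar> * s + D * s" using s1
      by (smt (verit, best) mult_le_cancel_left1)
    moreover have "(\<bar>C\<bar> + D) * s < s * s" using s2 s1 by (simp add: mult_strict_right_mono)
    ultimately show False by (simp add: power2_eq_square algebra_simps)
  qed
  have "closed K" unfolding K_def by (rule cl)
  moreover have "K \<subseteq> cball x1 (d + 1 + \<bar>C\<bar> + D)"
    using bd by (auto simp: dist_norm norm_minus_commute)
  hence "bounded K" using bounded_subset bounded_cball by blast
  ultimately have "compact K" using compact_eq_bounded_closed by blast
  moreover have "x1 \<in> K" using phix1 K_def by auto
  hence "K \<noteq> {}" by blast
  ultimately obtain zs where zs: "zs \<in> K" "\<forall>y\<in>K. \<phi> zs \<le> \<phi> y"
    using lsc_attains_min[of K \<phi>] cl by blast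
  have "\<phi> zs \<le> \<phi> z" for z
  proof (cases "z \<in> K")
    case True thus ?thesis using zs by blast
  next
    case False thus ?thesis using zs(1) unfolding K_def by auto
  qed
  thus ?thesis unfolding \<phi>_def by blast
qed



lemma norm_comb:
  fixes a b :: "'a::real_inner"
  shows "norm ((1 - s) *\<^sub>R a + s *\<^sub>R b) ^ 2 = (1 - s) * norm a ^ 2 + s * norm b ^ 2 - s * (1 - s) * norm (a - b) ^ 2"
  by (simp add: power2_norm_eq_inner inner_add_left inner_add_right inner_diff_left inner_diff_right inner_commute[of b a] algebra_simps)

lemma prox_min:
  fixes h :: "'a::euclidean_space \<Rightarrow> ereal"
  assumes hp: "proper_ext h" and hl: "lsc_ext h" and hc: "convex_ext h" and eta: "\<eta> > 0"
  shows "h (prox \<eta> h u) + ereal (norm (prox \<eta> h u - u) ^ 2 / (2 * \<eta>)) \<le> h z + ereal (norm (z - u) ^ 2 / (2 * \<eta>))"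
  using someI_ex[OF prox_exists[OF assms, of u]] unfolding prox_def by blast

lemma prox_fin:
  fixes h :: "'a::euclidean_space \<Rightarrow> ereal"
  assumes hp: "proper_ext h" and hl: "lsc_ext h" and hc: "convex_ext h" and eta: "\<eta> > 0"
  shows "h (prox \<eta> h u) = ereal (real_of_ereal (h (prox \<eta> h u)))"
proof -
  obtain x1 where x1: "h x1 \<noteq> \<infinity>" using hp unfolding proper_ext_def by blast
  have "h (prox \<eta> h u) + ereal (norm (prox \<eta> h u - u) ^ 2 / (2 * \<eta>)) \<le> h x1 + ereal (norm (x1 - u) ^ 2 / (2 * \<eta>))"
    by (rule prox_min[OF assms])
  hence "h (prox \<eta> h u) \<noteq> \<infinity>" using x1 by auto
  moreover have "h (prox \<eta> h u) \<noteq> -\<infinity>" using hp unfolding proper_ext_def by blast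
  ultimately show ?thesis by (cases "h (prox \<eta> h u)") auto
qed

lemma prox_three:
  fixes h :: "'a::euclidean_space \<Rightarrow> ereal" and u :: 'a
  assumes hp: "proper_ext h" and hl: "lsc_ext h" and hc: "convex_ext h" and eta: "\<eta> > 0"
    and hz: "h z = ereal hz"
  defines "p \<equiv> prox \<eta> h u"
  shows "real_of_ereal (h p) + norm (p - u) ^ 2 / (2 * \<eta>)
         \<le> hz + norm (z - u) ^ 2 / (2 * \<eta>) - norm (z - p) ^ 2 / (2 * \<eta>)"
proof -
  define hp' where "hp' = real_of_ereal (h p)"
  have hpe: "h p = ereal hp'" unfolding hp'_def p_def by (rule prox_fin[OF hp hl hc eta])
  define X where "X = hp' + norm (p - u) ^ 2 / (2 * \<eta>)"
  define Y where "Y = hz + norm (z - u) ^ 2 / (2 * \<eta>)"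
  define E where "E = norm (z - p) ^ 2 / (2 * \<eta>)"
  have E: "E \<ge> 0" unfolding E_def using eta by simp
  have key: "X \<le> Y - E + s * E" if s: "0 < s" "s < 1" for s
  proof -
    define w where "w = (1 - s) *\<^sub>R p + s *\<^sub>R z"
    have "h w \<le> ereal (1 - s) * h p + ereal s * h z"
      using hc s unfolding convex_ext_def w_def by auto
    hence hw: "h w \<le> ereal ((1 - s) * hp' + s * hz)" using hpe hz by simp
    have "h p + ereal (norm (p - u) ^ 2 / (2 * \<eta>)) \<le> h w + ereal (norm (w - u) ^ 2 / (2 * \<eta>))"
      unfolding p_def by (rule prox_min[OF hp hl hc eta])
    also have "\<dots> \<le> ereal ((1 - s) * hp' + s * hz) + ereal (norm (w - u) ^ 2 / (2 * \<eta>))"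
      by (intro add_right_mono hw)
    finally have A: "X \<le> (1 - s) * hp' + s * hz + norm (w - u) ^ 2 / (2 * \<eta>)"
      using hpe unfolding X_def by simp
    have "w - u = (1 - s) *\<^sub>R (p - u) + s *\<^sub>R (z - u)" unfolding w_def by (simp add: algebra_simps)
    hence N: "norm (w - u) ^ 2 = (1 - s) * norm (p - u) ^ 2 + s * norm (z - u) ^ 2 - s * (1 - s) * norm (p - z) ^ 2"
      using norm_comb[of s "p - u" "z - u"] by simp
    have B: "norm (w - u) ^ 2 / (2 * \<eta>) = (1 - s) * (norm (p - u) ^ 2 / (2 * \<eta>)) + s * (norm (z - u) ^ 2 / (2 * \<eta>)) - s * (1 - s) * E"
      unfolding E_def N norm_minus_commute[of z p] using eta by (simp add: field_simps)
    have "(1 - s) * hp' + s * hz + norm (w - u) ^ 2 / (2 * \<eta>) = (1 - s) * X + s * Y - s * (1 - s) * E"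
      unfolding X_def Y_def B by (simp add: algebra_simps)
    with A have "X \<le> (1 - s) * X + s * Y - s * (1 - s) * E" by linarith
    hence "s * X \<le> s * (Y - E + s * E)" by (simp add: algebra_simps)
    thus ?thesis using s by simp
  qed
  have "X \<le> Y - E"
  proof (rule field_le_epsilon)
    fix e :: real assume e: "0 < e"
    define s where "s = min (1/2) (e / (E + 1))"
    have s: "0 < s" "s < 1" using e E unfolding s_def by auto
    have "s \<le> e / (E + 1)" unfolding s_def by simp
    hence "s * E \<le> e / (E + 1) * E" using E by (rule mult_right_mono)
    also have "\<dots> \<le> e" using E e by (simp add: field_simps)
    finally show "X \<le> Y - E + e" using key[OF s] by simp
  qed
  thus ?thesis unfolding X_def Y_def E_def hp'_def .
qed



lemma line_deriv:
  fixes f :: "'a::real_inner \<Rightarrow> real"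
  assumes d: "\<And>z. (f has_derivative (\<lambda>v. g z \<bullet> v)) (at z)"
  shows "((\<lambda>t. f (x + t *\<^sub>R (y - x))) has_real_derivative (g (x + t *\<^sub>R (y - x)) \<bullet> (y - x))) (at t)"
proof -
  have l: "((\<lambda>t. x + t *\<^sub>R (y - x)) has_derivative (\<lambda>s. s *\<^sub>R (y - x))) (at t)"
    by (auto intro!: derivative_eq_intros)
  have "((\<lambda>t. f (x + t *\<^sub>R (y - x))) has_derivative (\<lambda>s. g (x + t *\<^sub>R (y - x)) \<bullet> (s *\<^sub>R (y - x)))) (at t)"
    by (rule has_derivative_compose[OF l d])
  moreover have "(\<lambda>s. g (x + t *\<^sub>R (y - x)) \<bullet> (s *\<^sub>R (y - x))) = (*) (g (x + t *\<^sub>R (y - x)) \<bullet> (y - x))"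
    by (auto simp: mult.commute)
  ultimately show ?thesis unfolding has_field_derivative_def by simp
qed

lemma descent:
  fixes f :: "'a::real_inner \<Rightarrow> real"
  assumes d: "\<And>z. (f has_derivative (\<lambda>v. g z \<bullet> v)) (at z)"
    and lip: "\<And>z w. norm (g z - g w) \<le> L * norm (z - w)"
  shows "\<bar>f y - f x - g x \<bullet> (y - x)\<bar> \<le> L / 2 * norm (y - x) ^ 2"
proof -
  define N where "N = norm (y - x)"
  define D0 where "D0 = g x \<bullet> (y - x)"
  have bnd: "\<bar>g (x + t *\<^sub>R (y - x)) \<bullet> (y - x) - D0\<bar> \<le> L * t * N ^ 2" if t: "0 \<le> t" for t
  proof -
    have "\<bar>g (x + t *\<^sub>R (y - x)) \<bullet> (y - x) - D0\<bar> = \<bar>(g (x + t *\<^sub>R (y - x)) - g x) \<bullet> (y - x)\<bar>"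
      unfolding D0_def by (simp add: inner_diff_left)
    also have "\<dots> \<le> norm (g (x + t *\<^sub>R (y - x)) - g x) * N"
      unfolding N_def by (rule Cauchy_Schwarz_ineq2)
    also have "\<dots> \<le> (L * norm (t *\<^sub>R (y - x))) * N"
      using lip[of "x + t *\<^sub>R (y - x)" x] unfolding N_def by (intro mult_right_mono) auto
    also have "\<dots> = L * t * N ^ 2" using t unfolding N_def by (simp add: power2_eq_square)
    finally show ?thesis .
  qed
  define \<psi>1 where "\<psi>1 t = f (x + t *\<^sub>R (y - x)) - f x - t * D0 - L / 2 * t ^ 2 * N ^ 2" for t
  define \<psi>2 where "\<psi>2 t = - f (x + t *\<^sub>R (y - x)) + f x + t * D0 - L / 2 * t ^ 2 * N ^ 2" for t
  have d1: "(\<psi>1 has_real_derivative (g (x + t *\<^sub>R (y - x)) \<bullet> (y - x) - D0 - L * t * N ^ 2)) (at t)" for t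
    unfolding \<psi>1_def by (auto intro!: derivative_eq_intros line_deriv[OF d])
  have d2: "(\<psi>2 has_real_derivative (- (g (x + t *\<^sub>R (y - x)) \<bullet> (y - x)) + D0 - L * t * N ^ 2)) (at t)" for t
    unfolding \<psi>2_def by (auto intro!: derivative_eq_intros line_deriv[OF d])
  have "\<psi>1 1 \<le> \<psi>1 0"
  proof (rule DERIV_nonpos_imp_nonincreasing[of 0 1])
    fix t :: real assume "0 \<le> t" "t \<le> 1"
    thus "\<exists>y. DERIV \<psi>1 t :> y \<and> y \<le> 0" using d1[of t] bnd[of t] by (intro exI[of _ "g (x + t *\<^sub>R (y - x)) \<bullet> (y - x) - D0 - L * t * N ^ 2"]) auto
  qed simp
  moreover have "\<psi>2 1 \<le> \<psi>2 0"
  proof (rule DERIV_nonpos_imp_nonincreasing[of 0 1])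
    fix t :: real assume "0 \<le> t" "t \<le> 1"
    thus "\<exists>y. DERIV \<psi>2 t :> y \<and> y \<le> 0" using d2[of t] bnd[of t] by (intro exI[of _ "- (g (x + t *\<^sub>R (y - x)) \<bullet> (y - x)) + D0 - L * t * N ^ 2"]) auto
  qed simp
  ultimately have "f y - f x - D0 \<le> L / 2 * N ^ 2" "- (f y - f x - D0) \<le> L / 2 * N ^ 2"
    unfolding \<psi>1_def \<psi>2_def by simp_all
  thus ?thesis unfolding abs_le_iff D0_def N_def by blast
qed



lemma young:
  fixes a b :: "'a::real_inner"
  assumes "\<eta> > 0"
  shows "a \<bullet> b \<le> \<eta> / 2 * norm a ^ 2 + norm b ^ 2 / (2 * \<eta>)"
proof -
  have "0 \<le> norm (\<eta> *\<^sub>R a - b) ^ 2" by simp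
  also have "\<dots> = \<eta>^2 * norm a ^ 2 - 2 * \<eta> * (a \<bullet> b) + norm b ^ 2"
    by (simp add: power2_norm_eq_inner inner_diff_left inner_diff_right inner_commute[of b a] algebra_simps) (simp add: power2_eq_square)
  finally have "2 * \<eta> * (a \<bullet> b) \<le> \<eta>^2 * norm a ^ 2 + norm b ^ 2" by simp
  moreover have "(2 * \<eta>) * (\<eta> / 2 * norm a ^ 2 + norm b ^ 2 / (2 * \<eta>)) = \<eta>^2 * norm a ^ 2 + norm b ^ 2"
    using assms by (simp add: field_simps power2_eq_square)
  ultimately have "(2 * \<eta>) * (a \<bullet> b) \<le> (2 * \<eta>) * (\<eta> / 2 * norm a ^ 2 + norm b ^ 2 / (2 * \<eta>))"
    by simp
  thus ?thesis using assms by (simp add: mult_le_cancel_left_pos)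
qed

lemma norm_add_scale:
  fixes a d :: "'a::real_inner"
  shows "norm (a + c *\<^sub>R d) ^ 2 = norm a ^ 2 + 2 * c * (d \<bullet> a) + c ^ 2 * norm d ^ 2"
  by (simp add: power2_norm_eq_inner inner_add_left inner_add_right inner_commute[of a d] algebra_simps) (simp add: power2_eq_square)

locale psvrg =
  fixes n :: nat and fs :: "nat \<Rightarrow> 'a::euclidean_space \<Rightarrow> real" and grad :: "nat \<Rightarrow> 'a \<Rightarrow> 'a"
    and h :: "'a \<Rightarrow> ereal" and L \<eta> :: real
  assumes n_pos: "n \<ge> 1" and L_pos: "L > 0" and eta_pos: "\<eta> > 0"
    and grad: "\<And>i x. i < n \<Longrightarrow> (fs i has_derivative (\<lambda>v. grad i x \<bullet> v)) (at x)"
    and smooth: "\<And>i x y. i < n \<Longrightarrow> norm (grad i x - grad i y) \<le> L * norm (x - y)"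
    and hp: "proper_ext h" and hl: "lsc_ext h" and hc: "convex_ext h"
begin

definition ff where "ff x = (1 / real n) * (\<Sum>i<n. fs i x)"
definition gf where "gf = full_grad n grad"
definition hr where "hr x = real_of_ereal (h x)"
definition Fr where "Fr x = ff x + hr x"

lemma gf_inner: "gf x \<bullet> v = (1 / real n) * (\<Sum>i<n. grad i x \<bullet> v)"
  by (simp add: gf_def full_grad_def inner_sum_left)

lemma ff_descent: "\<bar>ff y - ff x - gf x \<bullet> (y - x)\<bar> \<le> L / 2 * norm (y - x) ^ 2"
proof -
  have "ff y - ff x - gf x \<bullet> (y - x) = (1 / real n) * (\<Sum>i<n. fs i y - fs i x - grad i x \<bullet> (y - x))"
  proof -
    have "(\<Sum>i<n. fs i y - fs i x - grad i x \<bullet> (y - x)) = (\<Sum>i<n. fs i y) - (\<Sum>i<n. fs i x) - (\<Sum>i<n. grad i x \<bullet> (y - x))"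
      by (simp only: sum_subtractf)
    thus ?thesis unfolding ff_def gf_inner by (simp only: right_diff_distrib)
  qed
  also have "\<bar>\<dots>\<bar> = (1 / real n) * \<bar>\<Sum>i<n. fs i y - fs i x - grad i x \<bullet> (y - x)\<bar>"
    by (simp add: abs_mult)
  also have "\<dots> \<le> (1 / real n) * (\<Sum>i<n. \<bar>fs i y - fs i x - grad i x \<bullet> (y - x)\<bar>)"
    by (intro mult_left_mono sum_abs) simp
  also have "\<dots> \<le> (1 / real n) * (\<Sum>i<n. L / 2 * norm (y - x) ^ 2)"
    using grad smooth by (intro mult_left_mono sum_mono descent) auto
  also have "\<dots> = L / 2 * norm (y - x) ^ 2" using n_pos by simp
  finally show ?thesis .
qed

lemma prox_hr: "h (prox \<eta> h u) = ereal (hr (prox \<eta> h u))"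
  unfolding hr_def by (rule prox_fin[OF hp hl hc eta_pos])

lemma prox_step:
  fixes x d z :: 'a
  assumes hz: "h z = ereal (hr z)"
  defines "y \<equiv> prox \<eta> h (x - \<eta> *\<^sub>R d)"
  shows "Fr y \<le> Fr z + (gf x - d) \<bullet> (y - z) + (L / 2 - 1 / (2 * \<eta>)) * norm (y - x) ^ 2
            + (L / 2 + 1 / (2 * \<eta>)) * norm (z - x) ^ 2 - norm (z - y) ^ 2 / (2 * \<eta>)"
proof -
  have T: "hr y + norm (y - (x - \<eta> *\<^sub>R d)) ^ 2 / (2 * \<eta>)
         \<le> hr z + norm (z - (x - \<eta> *\<^sub>R d)) ^ 2 / (2 * \<eta>) - norm (z - y) ^ 2 / (2 * \<eta>)"
    using prox_three[OF hp hl hc eta_pos hz, of "x - \<eta> *\<^sub>R d"] unfolding y_def hr_def by simp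
  have "y - (x - \<eta> *\<^sub>R d) = (y - x) + \<eta> *\<^sub>R d" by (simp add: algebra_simps)
  hence "norm (y - (x - \<eta> *\<^sub>R d)) ^ 2 = norm (y - x) ^ 2 + 2 * \<eta> * (d \<bullet> (y - x)) + \<eta> ^ 2 * norm d ^ 2"
    by (simp only: norm_add_scale)
  hence e1: "norm (y - (x - \<eta> *\<^sub>R d)) ^ 2 / (2 * \<eta>) = norm (y - x) ^ 2 / (2 * \<eta>) + d \<bullet> (y - x) + \<eta> * norm d ^ 2 / 2"
    using eta_pos by (simp add: field_simps power2_eq_square)
  have "z - (x - \<eta> *\<^sub>R d) = (z - x) + \<eta> *\<^sub>R d" by (simp add: algebra_simps)
  hence "norm (z - (x - \<eta> *\<^sub>R d)) ^ 2 = norm (z - x) ^ 2 + 2 * \<eta> * (d \<bullet> (z - x)) + \<eta> ^ 2 * norm d ^ 2"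
    by (simp only: norm_add_scale)
  hence e2: "norm (z - (x - \<eta> *\<^sub>R d)) ^ 2 / (2 * \<eta>) = norm (z - x) ^ 2 / (2 * \<eta>) + d \<bullet> (z - x) + \<eta> * norm d ^ 2 / 2"
    using eta_pos by (simp add: field_simps power2_eq_square)
  have D1: "ff y \<le> ff x + gf x \<bullet> (y - x) + L / 2 * norm (y - x) ^ 2"
    using abs_le_D1[OF ff_descent[of y x]] by linarith
  have D2: "ff x \<le> ff z - gf x \<bullet> (z - x) + L / 2 * norm (z - x) ^ 2"
    using abs_le_D2[OF ff_descent[of z x]] by linarith
  have I: "(gf x - d) \<bullet> (y - z) = gf x \<bullet> (y - x) - gf x \<bullet> (z - x) - d \<bullet> (y - x) + d \<bullet> (z - x)"
    by (simp add: inner_diff_left inner_diff_right)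
  have "norm (y - x) ^ 2 / (2 * \<eta>) = 1 / (2 * \<eta>) * norm (y - x) ^ 2"
       "norm (z - x) ^ 2 / (2 * \<eta>) = 1 / (2 * \<eta>) * norm (z - x) ^ 2" by simp_all
  with T e1 e2 D1 D2 I show ?thesis unfolding Fr_def by (simp add: algebra_simps)
qed

lemma main_step:
  fixes x v :: 'a
  assumes hx: "h x = ereal (hr x)"
  defines "xp \<equiv> prox \<eta> h (x - \<eta> *\<^sub>R v)" and "xb \<equiv> prox \<eta> h (x - \<eta> *\<^sub>R gf x)"
  shows "Fr xp \<le> Fr x + \<eta> / 2 * norm (gf x - v) ^ 2 + (L / 2 - 1 / (2 * \<eta>)) * norm (xp - x) ^ 2
           + (L - 1 / (2 * \<eta>)) * norm (xb - x) ^ 2"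
proof -
  have A: "Fr xb \<le> Fr x + (L / 2 - 1 / (2 * \<eta>)) * norm (xb - x) ^ 2 - norm (xb - x) ^ 2 / (2 * \<eta>)"
    using prox_step[OF hx, of x "gf x"] unfolding xb_def by (simp add: norm_minus_commute)
  have B: "Fr xp \<le> Fr xb + (gf x - v) \<bullet> (xp - xb) + (L / 2 - 1 / (2 * \<eta>)) * norm (xp - x) ^ 2
            + (L / 2 + 1 / (2 * \<eta>)) * norm (xb - x) ^ 2 - norm (xp - xb) ^ 2 / (2 * \<eta>)"
    using prox_step[OF prox_hr[of "x - \<eta> *\<^sub>R gf x"], of x v] unfolding xb_def xp_def by (simp add: norm_minus_commute)
  have Y: "(gf x - v) \<bullet> (xp - xb) \<le> \<eta> / 2 * norm (gf x - v) ^ 2 + norm (xp - xb) ^ 2 / (2 * \<eta>)"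
    by (rule young[OF eta_pos])
  define a where "a = norm (xb - x) ^ 2"
  have "(L / 2 - 1 / (2 * \<eta>)) * a - a / (2 * \<eta>) + (L / 2 + 1 / (2 * \<eta>)) * a = (L - 1 / (2 * \<eta>)) * a"
    by (simp add: algebra_simps)
  with A B Y show ?thesis unfolding a_def by linarith
qed

end


lemma young2:
  fixes a b :: "'a::real_inner"
  assumes "\<beta> > 0"
  shows "norm (a + b) ^ 2 \<le> (1 + \<beta>) * norm a ^ 2 + (1 + 1 / \<beta>) * norm b ^ 2"
proof -
  define Q where "Q = \<beta> / 2 * norm a ^ 2 + norm b ^ 2 / (2 * \<beta>)"
  have "a \<bullet> b \<le> Q" unfolding Q_def by (rule young[OF assms])
  moreover have "norm (a + b) ^ 2 = norm a ^ 2 + 2 * (a \<bullet> b) + norm b ^ 2"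
    by (simp add: power2_norm_eq_inner inner_add_left inner_add_right inner_commute[of b a])
  moreover have "(1 + \<beta>) * norm a ^ 2 + (1 + 1 / \<beta>) * norm b ^ 2 = norm a ^ 2 + norm b ^ 2 + 2 * Q"
    unfolding Q_def using assms by (simp add: field_simps)
  ultimately show ?thesis by linarith
qed

context psvrg begin

definition vv where "vv b x xt I = (1 / real b) *\<^sub>R (\<Sum>i\<leftarrow>I. grad i x - grad i xt) + gf xt"
definition st where "st m b x0 Is k = svrg_state n grad h \<eta> m b x0 Is k"
definition eff where "eff m k s = (if k mod m = 0 then fst s else snd s)"
definition cc where "cc m b t = \<eta> * L^2 / real b * real (m - t)"
definition Phi where "Phi m b x0 Is k = Fr (fst (st m b x0 Is k)) + cc m b (k mod m) * norm (fst (st m b x0 Is k) - eff m k (st m b x0 Is k)) ^ 2"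
definition GG where "GG x = grad_map n grad h \<eta> x"

lemma st_Suc: "st m b x0 Is (Suc k) =
   (prox \<eta> h (fst (st m b x0 Is k) - \<eta> *\<^sub>R vv b (fst (st m b x0 Is k)) (eff m k (st m b x0 Is k)) (Is ! k)),
    eff m k (st m b x0 Is k))"
  unfolding st_def vv_def eff_def gf_def by (simp add: svrg_step_def Let_def)

lemma st_0: "st m b x0 Is 0 = (x0, x0)" unfolding st_def by simp

lemma st_fin: assumes "h x0 = ereal (hr x0)" shows "h (fst (st m b x0 Is k)) = ereal (hr (fst (st m b x0 Is k)))"
proof (cases k)
  case 0 thus ?thesis using assms by (simp add: st_0)
next
  case (Suc j) thus ?thesis by (simp add: st_Suc prox_hr)
qed

lemma GG_norm: "norm (prox \<eta> h (x - \<eta> *\<^sub>R gf x) - x) ^ 2 = \<eta>^2 * norm (GG x) ^ 2"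
proof -
  have "x - prox \<eta> h (x - \<eta> *\<^sub>R gf x) = \<eta> *\<^sub>R GG x"
    unfolding GG_def grad_map_def gf_def using eta_pos by simp
  hence "norm (prox \<eta> h (x - \<eta> *\<^sub>R gf x) - x) = \<eta> * norm (GG x)"
    using eta_pos by (simp add: norm_minus_commute)
  thus ?thesis by (simp add: power_mult_distrib)
qed

lemma lyap_step:
  fixes Is :: "nat list list" and k :: nat
  assumes m: "m \<ge> 1" and b: "b \<ge> 1" and hx0: "h x0 = ereal (hr x0)"
    and cond: "(L / 2 - 1 / (2 * \<eta>)) + \<eta> * L^2 / real b * (real m - 1) * (1 + 2 * real m) \<le> 0"
  defines "x \<equiv> fst (st m b x0 Is k)" and "xt \<equiv> eff m k (st m b x0 Is k)"
  shows "Phi m b x0 Is (Suc k) \<le> Phi m b x0 Is k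
          + \<eta> / 2 * (norm (gf x - vv b x xt (Is ! k)) ^ 2 - L^2 / real b * norm (x - xt) ^ 2)
          - (\<eta> / 2 - L * \<eta>^2) * norm (GG x) ^ 2"
proof -
  define t where "t = k mod m"
  have t: "t < m" using m unfolding t_def by simp
  define v where "v = vv b x xt (Is ! k)"
  define xp where "xp = prox \<eta> h (x - \<eta> *\<^sub>R v)"
  define xb where "xb = prox \<eta> h (x - \<eta> *\<^sub>R gf x)"
  define \<kappa> where "\<kappa> = \<eta> * L^2 / real b"
  have \<kappa>: "\<kappa> \<ge> 0" unfolding \<kappa>_def using eta_pos by simp
  have sS: "st m b x0 Is (Suc k) = (xp, xt)" unfolding xp_def v_def x_def xt_def by (rule st_Suc)
  have ct: "cc m b t = \<kappa> * (real m - real t)" unfolding cc_def \<kappa>_def using t by (simp add: of_nat_diff)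
  define c1 where "c1 = \<kappa> * (real m - real t - 1)"
  have c1: "0 \<le> c1" "c1 \<le> \<kappa> * (real m - 1)" unfolding c1_def using t \<kappa> by (auto intro!: mult_left_mono)
  have Phi_k: "Phi m b x0 Is k = Fr x + cc m b t * norm (x - xt) ^ 2"
    unfolding Phi_def x_def xt_def t_def ..
  have P1: "Phi m b x0 Is (Suc k) \<le> Fr xp + c1 * norm (xp - xt) ^ 2"
  proof (cases "Suc t = m")
    case True
    hence "Suc k mod m = 0" unfolding t_def by (metis mod_Suc)
    hence "Phi m b x0 Is (Suc k) = Fr xp" unfolding Phi_def sS eff_def by simp
    moreover have "c1 = 0" unfolding c1_def using True by simp
    ultimately show ?thesis by simp
  next
    case False
    hence "Suc k mod m = Suc t" unfolding t_def by (metis mod_Suc)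
    moreover have "Suc t < m" using False t by simp
    ultimately have "Phi m b x0 Is (Suc k) = Fr xp + cc m b (Suc t) * norm (xp - xt) ^ 2"
      unfolding Phi_def sS eff_def by simp
    moreover have "cc m b (Suc t) = c1" unfolding cc_def c1_def \<kappa>_def using \<open>Suc t < m\<close>
      by (simp add: of_nat_diff)
    ultimately show ?thesis by simp
  qed
  have M: "Fr xp \<le> Fr x + \<eta> / 2 * norm (gf x - v) ^ 2 + (L / 2 - 1 / (2 * \<eta>)) * norm (xp - x) ^ 2
           + (L - 1 / (2 * \<eta>)) * norm (xb - x) ^ 2"
    unfolding xp_def xb_def by (rule main_step[OF st_fin[OF hx0, of m b Is k, folded x_def]])
  have Y: "norm (xp - xt) ^ 2 \<le> (1 + 2 * real m) * norm (xp - x) ^ 2 + (1 + 1 / (2 * real m)) * norm (x - xt) ^ 2"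
    using young2[of "2 * real m" "xp - x" "x - xt"] m by simp
  have Yc: "c1 * norm (xp - xt) ^ 2 \<le> c1 * (1 + 2 * real m) * norm (xp - x) ^ 2 + c1 * (1 + 1 / (2 * real m)) * norm (x - xt) ^ 2"
    using mult_left_mono[OF Y c1(1)] by (simp add: algebra_simps)
  have C1: "L / 2 - 1 / (2 * \<eta>) + c1 * (1 + 2 * real m) \<le> 0"
  proof -
    have "c1 * (1 + 2 * real m) \<le> \<kappa> * (real m - 1) * (1 + 2 * real m)"
      using c1(2) m by (intro mult_right_mono) auto
    thus ?thesis using cond unfolding \<kappa>_def by linarith
  qed
  have C2: "c1 * (1 + 1 / (2 * real m)) + \<eta> * L^2 / real b / 2 \<le> cc m b t"
  proof -
    have "c1 * (1 + 1 / (2 * real m)) = c1 + c1 / (2 * real m)" by (simp add: algebra_simps)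
    moreover have "c1 / (2 * real m) \<le> \<kappa> / 2"
    proof -
      have "c1 \<le> \<kappa> * real m" using c1(2) \<kappa> by (smt (verit) mult_left_mono)
      thus ?thesis using m by (simp add: field_simps)
    qed
    moreover have "cc m b t = c1 + \<kappa>" unfolding ct c1_def by (simp add: algebra_simps)
    moreover have "\<eta> * L^2 / real b / 2 = \<kappa> / 2" unfolding \<kappa>_def by simp
    ultimately show ?thesis by linarith
  qed
  have C1': "(L / 2 - 1 / (2 * \<eta>)) * norm (xp - x) ^ 2 + c1 * (1 + 2 * real m) * norm (xp - x) ^ 2 \<le> 0"
  proof -
    have "(L / 2 - 1 / (2 * \<eta>)) * norm (xp - x) ^ 2 + c1 * (1 + 2 * real m) * norm (xp - x) ^ 2
        = (L / 2 - 1 / (2 * \<eta>) + c1 * (1 + 2 * real m)) * norm (xp - x) ^ 2" by (simp add: algebra_simps)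
    also have "\<dots> \<le> 0" using C1 by (simp add: mult_nonpos_nonneg)
    finally show ?thesis .
  qed
  have C2': "c1 * (1 + 1 / (2 * real m)) * norm (x - xt) ^ 2 + \<eta> / 2 * (L^2 / real b * norm (x - xt) ^ 2)
             \<le> cc m b t * norm (x - xt) ^ 2"
  proof -
    have "c1 * (1 + 1 / (2 * real m)) * norm (x - xt) ^ 2 + \<eta> / 2 * (L^2 / real b * norm (x - xt) ^ 2)
        = (c1 * (1 + 1 / (2 * real m)) + \<eta> * L^2 / real b / 2) * norm (x - xt) ^ 2" by (simp add: algebra_simps)
    also have "\<dots> \<le> cc m b t * norm (x - xt) ^ 2" using C2 by (simp add: mult_right_mono)
    finally show ?thesis .
  qed
  have G: "(L - 1 / (2 * \<eta>)) * norm (xb - x) ^ 2 = - (\<eta> / 2 - L * \<eta>^2) * norm (GG x) ^ 2"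
    unfolding xb_def GG_norm using eta_pos by (simp add: field_simps power2_eq_square)
  have "\<eta> / 2 * (norm (gf x - v) ^ 2 - L^2 / real b * norm (x - xt) ^ 2)
        = \<eta> / 2 * norm (gf x - v) ^ 2 - \<eta> / 2 * (L^2 / real b * norm (x - xt) ^ 2)" by (simp add: algebra_simps)
  with P1 M Yc C1' C2' G Phi_k show ?thesis unfolding v_def[symmetric] by linarith
qed

end


abbreviation "E p f \<equiv> measure_pmf.expectation p f"

lemma fin_rep: "finite (set_pmf p) \<Longrightarrow> finite (set_pmf (replicate_pmf k p))"
  unfolding set_replicate_pmf lists_eq_set by (rule finite_subset[OF _ finite_lists_length_eq[of "set_pmf p" k]]) auto

lemma len_rep: "xs \<in> set_pmf (replicate_pmf k p) \<Longrightarrow> length xs = k"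
  unfolding set_replicate_pmf by simp

lemma exp_bind:
  fixes g :: "'b \<Rightarrow> real"
  assumes "finite (set_pmf p)" "\<And>x. x \<in> set_pmf p \<Longrightarrow> finite (set_pmf (f x))"
  shows "E (p \<bind> f) g = E p (\<lambda>x. E (f x) g)"
proof -
  have "E (p \<bind> f) g = (\<Sum>a\<in>set_pmf p. pmf p a *\<^sub>R E (f a) g)"
    by (rule pmf_expectation_bind[OF assms(1) assms(2)]) auto
  also have "\<dots> = E p (\<lambda>x. E (f x) g)"
    by (rule integral_measure_pmf[OF assms(1), symmetric]) auto
  finally show ?thesis .
qed

lemma exp_cong:
  fixes f g :: "'b \<Rightarrow> real"
  shows "(\<And>x. x \<in> set_pmf p \<Longrightarrow> f x = g x) \<Longrightarrow> E p f = E p g"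
  by (rule integral_cong_AE) (auto simp: AE_measure_pmf_iff)

lemma exp_mono:
  fixes f g :: "'b \<Rightarrow> real"
  assumes "finite (set_pmf p)" "\<And>x. x \<in> set_pmf p \<Longrightarrow> f x \<le> g x"
  shows "E p f \<le> E p g"
  by (rule integral_mono_AE) (use assms in \<open>auto simp: AE_measure_pmf_iff intro: integrable_measure_pmf_finite\<close>)

lemma exp_const: "E p (\<lambda>x. c) = (c::real)" by simp

lemma rep_Suc_exp:
  fixes g :: "'b list \<Rightarrow> real"
  assumes "finite (set_pmf p)"
  shows "E (replicate_pmf (Suc k) p) g = E p (\<lambda>x. E (replicate_pmf k p) (\<lambda>xs. g (x # xs)))"
proof -
  have "E (replicate_pmf (Suc k) p) g = E p (\<lambda>x. E (replicate_pmf k p \<bind> (\<lambda>xs. return_pmf (x # xs))) g)"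
    by (simp only: replicate_pmf.simps, rule exp_bind) (use assms fin_rep in \<open>auto\<close>)
  also have "\<dots> = E p (\<lambda>x. E (replicate_pmf k p) (\<lambda>xs. g (x # xs)))"
    by (intro exp_cong, subst exp_bind) (use assms fin_rep in auto)
  finally show ?thesis .
qed

lemma rep_indep:
  fixes G :: "'b list \<Rightarrow> 'b \<Rightarrow> real"
  assumes fin: "finite (set_pmf p)" and k: "k < T"
  shows "E (replicate_pmf T p) (\<lambda>Is. G (take k Is) (Is ! k)) = E (replicate_pmf k p) (\<lambda>xs. E p (\<lambda>y. G xs y))"
proof -
  obtain r where T: "T = k + Suc r" using k by (metis add_Suc_right less_imp_Suc_add)
  have "E (replicate_pmf T p) (\<lambda>Is. G (take k Is) (Is ! k))
      = E (replicate_pmf k p) (\<lambda>xs. E (replicate_pmf (Suc r) p \<bind> (\<lambda>ys. return_pmf (xs @ ys))) (\<lambda>Is. G (take k Is) (Is ! k)))"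
    unfolding T replicate_pmf_distrib by (rule exp_bind) (use fin fin_rep in auto)
  also have "\<dots> = E (replicate_pmf k p) (\<lambda>xs. E (replicate_pmf (Suc r) p) (\<lambda>ys. G xs (ys ! 0)))"
  proof (rule exp_cong)
    fix xs assume xs: "xs \<in> set_pmf (replicate_pmf k p)"
    hence lx: "length xs = k" by (rule len_rep)
    have "E (replicate_pmf (Suc r) p \<bind> (\<lambda>ys. return_pmf (xs @ ys))) (\<lambda>Is. G (take k Is) (Is ! k))
        = E (replicate_pmf (Suc r) p) (\<lambda>ys. G (take k (xs @ ys)) ((xs @ ys) ! k))"
      by (subst exp_bind) (use fin fin_rep in auto)
    also have "\<dots> = E (replicate_pmf (Suc r) p) (\<lambda>ys. G xs (ys ! 0))"
      using lx by (simp add: nth_append)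
    finally show "E (replicate_pmf (Suc r) p \<bind> (\<lambda>ys. return_pmf (xs @ ys))) (\<lambda>Is. G (take k Is) (Is ! k))
        = E (replicate_pmf (Suc r) p) (\<lambda>ys. G xs (ys ! 0))" .
  qed
  also have "\<dots> = E (replicate_pmf k p) (\<lambda>xs. E p (\<lambda>y. G xs y))"
  proof (rule exp_cong)
    fix xs show "E (replicate_pmf (Suc r) p) (\<lambda>ys. G xs (ys ! 0)) = E p (\<lambda>y. G xs y)"
      using rep_Suc_exp[OF fin, of r "\<lambda>ys. G xs (ys ! 0)"] by simp
  qed
  finally show ?thesis .
qed



context psvrg begin

abbreviation "U \<equiv> pmf_of_set {..<n}"

lemma finU: "finite (set_pmf U)" using n_pos by (subst set_pmf_of_set) (auto simp: lessThan_empty_iff)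
lemma finRU: "finite (set_pmf (replicate_pmf k U))" by (rule fin_rep[OF finU])

lemma var_sum:
  fixes \<zeta> :: "nat \<Rightarrow> 'a" and a :: 'a
  assumes a: "a = (1 / real n) *\<^sub>R (\<Sum>i<n. \<zeta> i)"
  shows "E (replicate_pmf k U) (\<lambda>I. norm (\<Sum>i\<leftarrow>I. a - \<zeta> i) ^ 2) = real k * ((1 / real n) * (\<Sum>i<n. norm (a - \<zeta> i) ^ 2))"
proof (induction k)
  case 0 thus ?case by simp
next
  case (Suc k)
  define S where "S xs = (\<Sum>i\<leftarrow>xs. a - \<zeta> i)" for xs :: "nat list"
  define V where "V = (1 / real n) * (\<Sum>i<n. norm (a - \<zeta> i) ^ 2)"
  let ?R = "replicate_pmf k U"
  have int: "integrable (measure_pmf ?R) f" for f :: "nat list \<Rightarrow> real"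
    by (rule integrable_measure_pmf_finite[OF finRU])
  have sum0: "(\<Sum>x<n. a - \<zeta> x) = 0"
  proof -
    have "(\<Sum>x<n. a - \<zeta> x) = real n *\<^sub>R a - (\<Sum>x<n. \<zeta> x)" by (simp add: sum_subtractf sum_constant_scaleR)
    moreover have "real n *\<^sub>R a = (\<Sum>x<n. \<zeta> x)" unfolding a using n_pos by simp
    ultimately show ?thesis by simp
  qed
  have inner: "E ?R (\<lambda>xs. norm ((a - \<zeta> x) + S xs) ^ 2)
       = norm (a - \<zeta> x) ^ 2 + 2 * E ?R (\<lambda>xs. (a - \<zeta> x) \<bullet> S xs) + real k * V" for x
  proof -
    have "(\<lambda>xs. norm ((a - \<zeta> x) + S xs) ^ 2) = (\<lambda>xs. norm (a - \<zeta> x) ^ 2 + 2 * ((a - \<zeta> x) \<bullet> S xs) + norm (S xs) ^ 2)"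
      by (rule ext) (simp add: power2_norm_eq_inner inner_add_left inner_add_right inner_commute[of "S _" "a - \<zeta> x"])
    hence "E ?R (\<lambda>xs. norm ((a - \<zeta> x) + S xs) ^ 2) = E ?R (\<lambda>xs. norm (a - \<zeta> x) ^ 2 + 2 * ((a - \<zeta> x) \<bullet> S xs) + norm (S xs) ^ 2)"
      by simp
    also have "\<dots> = norm (a - \<zeta> x) ^ 2 + 2 * E ?R (\<lambda>xs. (a - \<zeta> x) \<bullet> S xs) + E ?R (\<lambda>xs. norm (S xs) ^ 2)"
      using int by simp
    also have "E ?R (\<lambda>xs. norm (S xs) ^ 2) = real k * V" unfolding S_def V_def by (rule Suc.IH)
    finally show ?thesis .
  qed
  have cross: "(\<Sum>x<n. E ?R (\<lambda>xs. (a - \<zeta> x) \<bullet> S xs)) = 0"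
  proof -
    have "(\<Sum>x<n. E ?R (\<lambda>xs. (a - \<zeta> x) \<bullet> S xs)) = E ?R (\<lambda>xs. \<Sum>x<n. (a - \<zeta> x) \<bullet> S xs)"
      using int by (simp add: Bochner_Integration.integral_sum)
    also have "\<dots> = E ?R (\<lambda>xs. (\<Sum>x<n. a - \<zeta> x) \<bullet> S xs)" by (simp add: inner_sum_left)
    also have "\<dots> = 0" by (simp add: sum0)
    finally show ?thesis .
  qed
  have "E (replicate_pmf (Suc k) U) (\<lambda>I. norm (S I) ^ 2) = E U (\<lambda>x. E ?R (\<lambda>xs. norm (S (x # xs)) ^ 2))"
    by (rule rep_Suc_exp[OF finU])
  also have "\<dots> = E U (\<lambda>x. norm (a - \<zeta> x) ^ 2 + 2 * E ?R (\<lambda>xs. (a - \<zeta> x) \<bullet> S xs) + real k * V)"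
    using inner unfolding S_def by simp
  also have "\<dots> = (\<Sum>x<n. norm (a - \<zeta> x) ^ 2 + 2 * E ?R (\<lambda>xs. (a - \<zeta> x) \<bullet> S xs) + real k * V) / real n"
    using n_pos by (subst integral_pmf_of_set) (auto simp: lessThan_empty_iff)
  also have "\<dots> = ((\<Sum>x<n. norm (a - \<zeta> x) ^ 2) + 2 * (\<Sum>x<n. E ?R (\<lambda>xs. (a - \<zeta> x) \<bullet> S xs)) + real n * (real k * V)) / real n"
    by (simp add: sum.distrib sum_distrib_left)
  also have "\<dots> = real (Suc k) * V"
    using n_pos unfolding cross V_def by (simp add: field_simps)
  finally show ?case unfolding S_def V_def .
qed

lemma sum_list_diff_const:
  fixes a :: "'b::real_vector"
  shows "(\<Sum>i\<leftarrow>I. a - \<zeta> i) = real (length I) *\<^sub>R a - (\<Sum>i\<leftarrow>I. \<zeta> i)"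
  by (induct I) (auto simp: algebra_simps)

lemma var_bound:
  assumes b: "b \<ge> 1"
  shows "E (replicate_pmf b U) (\<lambda>I. norm (gf x - vv b x xt I) ^ 2) \<le> L^2 / real b * norm (x - xt) ^ 2"
proof -
  define \<zeta> where "\<zeta> i = grad i x - grad i xt" for i
  define a where "a = gf x - gf xt"
  have a: "a = (1 / real n) *\<^sub>R (\<Sum>i<n. \<zeta> i)"
    unfolding a_def \<zeta>_def gf_def full_grad_def by (simp add: sum_subtractf scaleR_diff_right)
  have eq: "norm (gf x - vv b x xt I) ^ 2 = (1 / real b)^2 * norm (\<Sum>i\<leftarrow>I. a - \<zeta> i) ^ 2"
    if "I \<in> set_pmf (replicate_pmf b U)" for I
  proof -
    have lI: "length I = b" using len_rep[OF that] .
    have "gf x - vv b x xt I = (1 / real b) *\<^sub>R (\<Sum>i\<leftarrow>I. a - \<zeta> i)"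
      unfolding vv_def sum_list_diff_const lI a_def \<zeta>_def using b
      by (simp add: algebra_simps)
    thus ?thesis by (simp add: power_divide)
  qed
  have "E (replicate_pmf b U) (\<lambda>I. norm (gf x - vv b x xt I) ^ 2)
      = E (replicate_pmf b U) (\<lambda>I. (1 / real b)^2 * norm (\<Sum>i\<leftarrow>I. a - \<zeta> i) ^ 2)"
    by (rule exp_cong) (rule eq)
  also have "\<dots> = (1 / real b)^2 * (real b * ((1 / real n) * (\<Sum>i<n. norm (a - \<zeta> i) ^ 2)))"
    using var_sum[OF a, of b] by simp
  also have "\<dots> = (1 / real b) * ((1 / real n) * (\<Sum>i<n. norm (a - \<zeta> i) ^ 2))"
    using b by (simp add: power2_eq_square)
  also have "\<dots> \<le> (1 / real b) * (L^2 * norm (x - xt) ^ 2)"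
  proof (rule mult_left_mono)
    have sz: "(\<Sum>i<n. \<zeta> i) = real n *\<^sub>R a" using a n_pos by simp
    have "(\<Sum>i<n. norm (a - \<zeta> i) ^ 2) = (\<Sum>i<n. norm a ^ 2 - 2 * (a \<bullet> \<zeta> i) + norm (\<zeta> i) ^ 2)"
      by (rule sum.cong) (simp_all add: power2_norm_eq_inner inner_diff_left inner_diff_right inner_commute[of "\<zeta> _" a])
    also have "\<dots> = real n * norm a ^ 2 - 2 * (a \<bullet> (\<Sum>i<n. \<zeta> i)) + (\<Sum>i<n. norm (\<zeta> i) ^ 2)"
      by (simp add: sum.distrib sum_subtractf inner_sum_right sum_distrib_left)
    also have "\<dots> = (\<Sum>i<n. norm (\<zeta> i) ^ 2) - real n * norm a ^ 2"
      unfolding sz by (simp add: power2_norm_eq_inner)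
    also have "\<dots> \<le> (\<Sum>i<n. norm (\<zeta> i) ^ 2)" by simp
    also have "\<dots> \<le> (\<Sum>i<n. (L * norm (x - xt)) ^ 2)"
      using smooth L_pos unfolding \<zeta>_def by (intro sum_mono power_mono) auto
    finally have "(\<Sum>i<n. norm (a - \<zeta> i) ^ 2) \<le> real n * (L * norm (x - xt)) ^ 2" by simp
    thus "(1 / real n) * (\<Sum>i<n. norm (a - \<zeta> i) ^ 2) \<le> L^2 * norm (x - xt) ^ 2"
      using n_pos by (simp add: field_simps power_mult_distrib)
  qed simp
  also have "\<dots> = L^2 / real b * norm (x - xt) ^ 2" by simp
  finally show ?thesis .
qed

end


context psvrg begin

lemma st_cong: "(\<And>j. j < k \<Longrightarrow> Is ! j = Js ! j) \<Longrightarrow> st m b x0 Is k = st m b x0 Js k"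
proof (induction k)
  case 0 thus ?case by (simp add: st_0)
next
  case (Suc k)
  hence "st m b x0 Is k = st m b x0 Js k" by simp
  moreover have "Is ! k = Js ! k" using Suc.prems by simp
  ultimately show ?case by (simp only: st_Suc)
qed

lemma st_take: "st m b x0 Is k = st m b x0 (take k Is) k"
  by (rule st_cong) simp

abbreviation "Q T b \<equiv> replicate_pmf T (replicate_pmf b U)"

lemma finQ: "finite (set_pmf (Q T b))" by (rule fin_rep[OF finRU])

lemma intQ: "integrable (measure_pmf (Q T b)) (f :: nat list list \<Rightarrow> real)"
  by (rule integrable_measure_pmf_finite[OF finQ])

lemma cc_nonneg: "cc m b t \<ge> 0" unfolding cc_def using eta_pos by simp

lemma exp_step:
  assumes k: "k < T" and m: "m \<ge> 1" and b: "b \<ge> 1" and hx0: "h x0 = ereal (hr x0)"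
    and cond: "(L / 2 - 1 / (2 * \<eta>)) + \<eta> * L^2 / real b * (real m - 1) * (1 + 2 * real m) \<le> 0"
  shows "E (Q T b) (\<lambda>Is. Phi m b x0 Is (Suc k)) \<le> E (Q T b) (\<lambda>Is. Phi m b x0 Is k)
          - (\<eta> / 2 - L * \<eta>^2) * E (Q T b) (\<lambda>Is. norm (GG (fst (st m b x0 Is k))) ^ 2)"
proof -
  define D where "D xs I = norm (gf (fst (st m b x0 xs k)) - vv b (fst (st m b x0 xs k)) (eff m k (st m b x0 xs k)) I) ^ 2
      - L^2 / real b * norm (fst (st m b x0 xs k) - eff m k (st m b x0 xs k)) ^ 2" for xs I
  define \<gamma> where "\<gamma> = \<eta> / 2 - L * \<eta>^2"
  have "E (Q T b) (\<lambda>Is. Phi m b x0 Is (Suc k)) \<le> E (Q T b) (\<lambda>Is. Phi m b x0 Is k + \<eta> / 2 * D Is (Is ! k) - \<gamma> * norm (GG (fst (st m b x0 Is k))) ^ 2)"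
    by (rule exp_mono[OF finQ]) (unfold D_def \<gamma>_def, rule lyap_step[OF m b hx0 cond])
  also have "\<dots> = E (Q T b) (\<lambda>Is. Phi m b x0 Is k) + \<eta> / 2 * E (Q T b) (\<lambda>Is. D Is (Is ! k)) - \<gamma> * E (Q T b) (\<lambda>Is. norm (GG (fst (st m b x0 Is k))) ^ 2)"
    by (simp add: intQ)
  also have "E (Q T b) (\<lambda>Is. D Is (Is ! k)) \<le> 0"
  proof -
    have "E (Q T b) (\<lambda>Is. D Is (Is ! k)) = E (Q T b) (\<lambda>Is. D (take k Is) (Is ! k))"
      unfolding D_def by (subst (1 2 3 4 5 6) st_take) simp
    also have "\<dots> = E (replicate_pmf k (replicate_pmf b U)) (\<lambda>xs. E (replicate_pmf b U) (\<lambda>I. D xs I))"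
      by (rule rep_indep[OF finRU k])
    also have "\<dots> \<le> E (replicate_pmf k (replicate_pmf b U)) (\<lambda>xs. 0)"
    proof (rule exp_mono[OF finQ])
      fix xs
      show "E (replicate_pmf b U) (D xs) \<le> 0"
        unfolding D_def using var_bound[OF b] by (simp add: integrable_measure_pmf_finite[OF finRU])
    qed
    finally show ?thesis by simp
  qed
  hence "\<eta> / 2 * E (Q T b) (\<lambda>Is. D Is (Is ! k)) \<le> 0" using eta_pos by (simp add: mult_nonneg_nonpos)
  ultimately show ?thesis unfolding \<gamma>_def by linarith
qed

lemma telescope:
  assumes m: "m \<ge> 1" and b: "b \<ge> 1" and hx0: "h x0 = ereal (hr x0)"
    and cond: "(L / 2 - 1 / (2 * \<eta>)) + \<eta> * L^2 / real b * (real m - 1) * (1 + 2 * real m) \<le> 0"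
  shows "K \<le> T \<Longrightarrow> (\<eta> / 2 - L * \<eta>^2) * (\<Sum>k<K. E (Q T b) (\<lambda>Is. norm (GG (fst (st m b x0 Is k))) ^ 2))
          \<le> E (Q T b) (\<lambda>Is. Phi m b x0 Is 0) - E (Q T b) (\<lambda>Is. Phi m b x0 Is K)"
proof (induction K)
  case 0 thus ?case by simp
next
  case (Suc K)
  hence "K < T" by simp
  from exp_step[OF this m b hx0 cond] Suc show ?case by (simp add: algebra_simps)
qed

lemma Phi_0: "Phi m b x0 Is 0 = Fr x0" unfolding Phi_def eff_def by (simp add: st_0)

lemma Phi_ge: "Phi m b x0 Is k \<ge> Fr (fst (st m b x0 Is k))"
  unfolding Phi_def using cc_nonneg by simp

lemma out_exp:
  assumes T: "T \<ge> 1"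
  shows "E (proxsvrg_output n grad h x0 T m b \<eta>) g = (\<Sum>k<T. E (Q T b) (\<lambda>Is. g (fst (st m b x0 Is k)))) / real T"
proof -
  have ne: "{..<T} \<noteq> {}" using T by (auto simp: lessThan_empty_iff)
  have "E (proxsvrg_output n grad h x0 T m b \<eta>) g
      = E (Q T b) (\<lambda>Is. E (pmf_of_set {..<T} \<bind> (\<lambda>k. return_pmf (fst (st m b x0 Is k)))) g)"
    unfolding proxsvrg_output_def st_def by (rule exp_bind[OF finQ]) (use ne in \<open>auto simp: set_bind_pmf\<close>)
  also have "\<dots> = E (Q T b) (\<lambda>Is. (\<Sum>k<T. g (fst (st m b x0 Is k))) / real T)"
  proof (rule exp_cong)
    fix Is
    show "E (pmf_of_set {..<T} \<bind> (\<lambda>k. return_pmf (fst (st m b x0 Is k)))) g = (\<Sum>k<T. g (fst (st m b x0 Is k))) / real T"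
      using ne by (subst exp_bind) (auto simp: integral_pmf_of_set)
  qed
  also have "\<dots> = (\<Sum>k<T. E (Q T b) (\<lambda>Is. g (fst (st m b x0 Is k)))) / real T"
    by (simp add: intQ Bochner_Integration.integral_sum)
  finally show ?thesis .
qed

end


theorem theorem5:
  fixes n b m T :: nat
    and fs :: "nat \<Rightarrow> 'a::euclidean_space \<Rightarrow> real"
    and grad :: "nat \<Rightarrow> 'a \<Rightarrow> 'a"
    and h :: "'a \<Rightarrow> ereal"
    and L \<rho> \<eta> :: real
    and x0 xstar :: 'a
  assumes n_pos: "n \<ge> 1"
    and b_pos: "b \<ge> 1" and b_le: "b \<le> n"
    and m_pos: "m \<ge> 1"
    and T_pos: "T \<ge> 1" and T_mult: "m dvd T"
    and L_pos: "L > 0"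
    and grad: "\<And>i x. i < n \<Longrightarrow> (fs i has_derivative (\<lambda>v. grad i x \<bullet> v)) (at x)"
    and smooth: "\<And>i x y. i < n \<Longrightarrow> norm (grad i x - grad i y) \<le> L * norm (x - y)"
    and h_proper: "proper_ext h"
    and h_lsc: "lsc_ext h"
    and h_convex: "convex_ext h"
    and h_dom: "closed (dom_ext h)"
    and xstar_min: "\<And>x. ereal ((1 / real n) * (\<Sum>i<n. fs i xstar)) + h xstar
                         \<le> ereal ((1 / real n) * (\<Sum>i<n. fs i x)) + h x"
    and rho_pos: "0 < \<rho>" and rho_lt: "\<rho> < 1 / 2"
    and rho_cond: "4 * \<rho>^2 * real m ^ 2 / real b + \<rho> \<le> 1"
    and eta_def: "\<eta> = \<rho> / L"
  shows "ereal (measure_pmf.expectation (proxsvrg_output n grad h x0 T m b \<eta>)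
                  (\<lambda>x. norm (grad_map n grad h \<eta> x) ^ 2))
         \<le> ereal (2 * L / (\<rho> * (1 - 2 * \<rho>) * real T)) *
           ((ereal ((1 / real n) * (\<Sum>i<n. fs i x0)) + h x0)
            - (ereal ((1 / real n) * (\<Sum>i<n. fs i xstar)) + h xstar))"
proof -
  have eta: "\<eta> > 0" using eta_def rho_pos L_pos by simp
  interpret P: psvrg n fs grad h L \<eta>
    by (unfold_locales) (use n_pos L_pos eta grad smooth h_proper h_lsc h_convex in auto)
  define c where "c = 2 * L / (\<rho> * (1 - 2 * \<rho>) * real T)"
  have c: "c > 0" unfolding c_def using L_pos rho_pos rho_lt T_pos by simp
  have ninf: "\<And>x. h x \<noteq> -\<infinity>" using h_proper unfolding proper_ext_def by blast
  obtain x1 where x1: "h x1 \<noteq> \<infinity>" using h_proper unfolding proper_ext_def by blast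
  have "ereal ((1 / real n) * (\<Sum>i<n. fs i xstar)) + h xstar \<le> ereal ((1 / real n) * (\<Sum>i<n. fs i x1)) + h x1"
    by (rule xstar_min)
  hence "h xstar \<noteq> \<infinity>" using x1 ninf[of x1] by auto
  hence hxs: "h xstar = ereal (P.hr xstar)" using ninf[of xstar] unfolding P.hr_def by (cases "h xstar") auto
  show ?thesis
  proof (cases "h x0 = \<infinity>")
    case True
    have "((ereal ((1 / real n) * (\<Sum>i<n. fs i x0)) + h x0)
            - (ereal ((1 / real n) * (\<Sum>i<n. fs i xstar)) + h xstar)) = \<infinity>"
      using True hxs by simp
    hence R: "ereal (2 * L / (\<rho> * (1 - 2 * \<rho>) * real T)) *
           ((ereal ((1 / real n) * (\<Sum>i<n. fs i x0)) + h x0)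
            - (ereal ((1 / real n) * (\<Sum>i<n. fs i xstar)) + h xstar)) = \<infinity>"
      using c L_pos rho_pos rho_lt T_pos unfolding c_def by simp
    show ?thesis unfolding R by simp
  next
    case False
    hence hx0: "h x0 = ereal (P.hr x0)" using ninf[of x0] unfolding P.hr_def by (cases "h x0") auto
    have Fmin: "P.Fr xstar \<le> P.Fr y" if "h y = ereal (P.hr y)" for y
      using xstar_min[of y] hxs that unfolding P.Fr_def P.ff_def by simp
    have cond: "(L / 2 - 1 / (2 * \<eta>)) + \<eta> * L^2 / real b * (real m - 1) * (1 + 2 * real m) \<le> 0"
    proof -
      have bpos: "real b > 0" using b_pos by simp
      have "(real m - 1) * (1 + 2 * real m) \<le> 2 * real m ^ 2" by (simp add: power2_eq_square algebra_simps)
      hence "\<rho>^2 * ((real m - 1) * (1 + 2 * real m)) / real b \<le> \<rho>^2 * (2 * real m ^ 2) / real b"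
        using bpos by (intro divide_right_mono mult_left_mono) auto
      also have "\<dots> \<le> (1 - \<rho>) / 2" using rho_cond by simp
      finally have A: "\<rho>^2 * ((real m - 1) * (1 + 2 * real m)) / real b \<le> (1 - \<rho>) / 2" .
      have "\<eta> * L^2 / real b * (real m - 1) * (1 + 2 * real m) = (L / \<rho>) * (\<rho>^2 * ((real m - 1) * (1 + 2 * real m)) / real b)"
        unfolding eta_def using rho_pos L_pos bpos by (simp add: field_simps power2_eq_square)
      also have "\<dots> \<le> (L / \<rho>) * ((1 - \<rho>) / 2)" using A L_pos rho_pos by (intro mult_left_mono) auto
      also have "\<dots> = - (L / 2 - 1 / (2 * \<eta>))" unfolding eta_def using rho_pos L_pos by (simp add: field_simps)
      finally show ?thesis by linarith
    qed
    have m1: "m \<ge> 1" and b1: "b \<ge> 1" using m_pos b_pos by auto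
    define S where "S = (\<Sum>k<T. E (P.Q T b) (\<lambda>Is. norm (P.GG (fst (P.st m b x0 Is k))) ^ 2))"
    have tel: "(\<eta> / 2 - L * \<eta>^2) * S \<le> E (P.Q T b) (\<lambda>Is. P.Phi m b x0 Is 0) - E (P.Q T b) (\<lambda>Is. P.Phi m b x0 Is T)"
      unfolding S_def by (rule P.telescope[OF m1 b1 hx0 cond]) simp
    have "E (P.Q T b) (\<lambda>Is. P.Fr xstar) \<le> E (P.Q T b) (\<lambda>Is. P.Phi m b x0 Is T)"
    proof (rule exp_mono[OF P.finQ])
      fix Is
      show "P.Fr xstar \<le> P.Phi m b x0 Is T"
        using Fmin[OF P.st_fin[OF hx0]] P.Phi_ge order_trans by blast
    qed
    hence "(\<eta> / 2 - L * \<eta>^2) * S \<le> P.Fr x0 - P.Fr xstar" using tel by (simp add: P.Phi_0)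
    moreover have "\<eta> / 2 - L * \<eta>^2 = \<rho> * (1 - 2 * \<rho>) / (2 * L)"
      unfolding eta_def using L_pos by (simp add: field_simps power2_eq_square)
    ultimately have "\<rho> * (1 - 2 * \<rho>) / (2 * L) * S \<le> P.Fr x0 - P.Fr xstar" by simp
    hence S1: "(\<rho> * (1 - 2 * \<rho>) / (2 * L)) * S \<le> P.Fr x0 - P.Fr xstar" .
    have gpos: "\<rho> * (1 - 2 * \<rho>) / (2 * L) > 0" using L_pos rho_pos rho_lt by simp
    have "S \<le> (P.Fr x0 - P.Fr xstar) / (\<rho> * (1 - 2 * \<rho>) / (2 * L))"
    proof -
      define g where "g = \<rho> * (1 - 2 * \<rho>) / (2 * L)"
      have "g > 0" "g * S \<le> P.Fr x0 - P.Fr xstar" using gpos S1 unfolding g_def by auto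
      hence "S \<le> (P.Fr x0 - P.Fr xstar) / g" by (simp add: pos_le_divide_eq mult.commute)
      thus ?thesis unfolding g_def .
    qed
    hence "S / real T \<le> (P.Fr x0 - P.Fr xstar) / (\<rho> * (1 - 2 * \<rho>) / (2 * L)) / real T"
      by (rule divide_right_mono) simp
    also have "\<dots> = c * (P.Fr x0 - P.Fr xstar)"
    proof -
      have "\<rho> \<noteq> 0" "1 - 2 * \<rho> \<noteq> 0" "L \<noteq> 0" "real T \<noteq> 0" using L_pos rho_pos rho_lt T_pos by auto
      thus ?thesis unfolding c_def by (simp add: field_simps)
    qed
    finally have S: "S / real T \<le> c * (P.Fr x0 - P.Fr xstar)" .
    have "measure_pmf.expectation (proxsvrg_output n grad h x0 T m b \<eta>) (\<lambda>x. norm (grad_map n grad h \<eta> x) ^ 2) = S / real T"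
      unfolding S_def P.GG_def by (rule P.out_exp) (use T_pos in simp)
    moreover have "ereal (2 * L / (\<rho> * (1 - 2 * \<rho>) * real T)) *
           ((ereal ((1 / real n) * (\<Sum>i<n. fs i x0)) + h x0)
            - (ereal ((1 / real n) * (\<Sum>i<n. fs i xstar)) + h xstar)) = ereal (c * (P.Fr x0 - P.Fr xstar))"
      unfolding c_def P.Fr_def P.ff_def using hx0 hxs by simp
    ultimately show ?thesis using S by simp
  qed
qed


end
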